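(* Every equidistributed infinite permutation is aperiodic, i.e. not ultimately periodic.
   Context: An infinite permutation is an equivalence class of sequences $(a[n])_{n\ge0}$ of pairwise distinct reals, where two sequences are equivalent if $a[i]<a[j]\iff b[i]<b[j]$ for all $i,j$; write $\alpha=(\alpha[n])_{n\ge0}$ with the induced order. A sequence $(a[n])$ in $[0,1]$ is equidistributed if $\lim_{n\to\infty}\frac{\#\{0\le i<n:a[i]<t\}}{n}=t$ for each $t\in[0,1]$; a permutation is equidistributed if it has an equidistributed representative in $[0,1]$. A permutation $\alpha$ is ultimately $t$-periodic ($t\ge1$) if for all sufficiently large $i,j$, $\alpha[i]<\alpha[j]\iff\alpha[i+t]<\alpha[j+t]$; it is ultimately periodic if it is ultimately $t$-periodic for some $t$. *)

theory Defs
  imports Complex_Main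
begin

text \<open>An infinite permutation is represented by any of its representatives:
  a sequence of pairwise distinct reals. Two representatives are equivalent
  iff they induce the same order on the index set.\<close>

definition perm_equiv :: "(nat \<Rightarrow> real) \<Rightarrow> (nat \<Rightarrow> real) \<Rightarrow> bool" where
  "perm_equiv a b \<longleftrightarrow> (\<forall>i j. a i < a j \<longleftrightarrow> b i < b j)"

definition equidistributed_seq :: "(nat \<Rightarrow> real) \<Rightarrow> bool" where
  "equidistributed_seq a \<longleftrightarrow> (\<forall>n. a n \<in> {0..1}) \<and>
     (\<forall>t\<in>{0..1}. (\<lambda>n. real (card {i. i < n \<and> a i < t}) / real n) \<longlonglongrightarrow> t)"

definition equidistributed_perm :: "(nat \<Rightarrow> real) \<Rightarrow> bool" where
  "equidistributed_perm a \<longleftrightarrow>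
     (\<exists>b. inj b \<and> perm_equiv a b \<and> equidistributed_seq b)"

definition ult_t_periodic :: "nat \<Rightarrow> (nat \<Rightarrow> real) \<Rightarrow> bool" where
  "ult_t_periodic t a \<longleftrightarrow>
     (\<exists>N. \<forall>i j. N \<le> i \<longrightarrow> N \<le> j \<longrightarrow> (a i < a j \<longleftrightarrow> a (i + t) < a (j + t)))"

definition ult_periodic :: "(nat \<Rightarrow> real) \<Rightarrow> bool" where
  "ult_periodic a \<longleftrightarrow> (\<exists>t\<ge>1. ult_t_periodic t a)"

end

theory Submission
  imports Defs
begin

lemma class_mono:
  fixes b :: "nat \<Rightarrow> real"
  assumes per: "\<And>i j. N \<le> i \<Longrightarrow> N \<le> j \<Longrightarrow> (b i < b j \<longleftrightarrow> b (i + t) < b (j + t))"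
    and i: "N \<le> i"
  shows "monoseq (\<lambda>k. b (i + k * t))"
proof -
  have step: "b (i + k*t) < b (i + Suc k * t) \<longleftrightarrow> b (i + Suc k*t) < b (i + Suc (Suc k) * t)" for k
    using per[of "i + k*t" "i + Suc k * t"] i by (simp add: algebra_simps)
  have all: "b (i + k*t) < b (i + Suc k * t) \<longleftrightarrow> b i < b (i + t)" for k
    by (induction k) (use step in auto)
  show ?thesis
  proof (cases "b i < b (i + t)")
    case True
    then show ?thesis unfolding monoseq_Suc using all by (auto intro: less_imp_le)
  next
    case False
    then show ?thesis unfolding monoseq_Suc using all by (auto simp: not_less)
  qed
qed

theorem corollary1:
  fixes a :: "nat \<Rightarrow> real"
  assumes "inj a"
    and "equidistributed_perm a"
  shows "\<not> ult_periodic a"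
proof
  assume "ult_periodic a"
  then obtain t N where t: "t \<ge> 1" and perA: "\<And>i j. N \<le> i \<Longrightarrow> N \<le> j \<Longrightarrow> (a i < a j \<longleftrightarrow> a (i + t) < a (j + t))"
    unfolding ult_periodic_def ult_t_periodic_def by blast
  from assms(2) obtain b where eq: "perm_equiv a b" and ed: "equidistributed_seq b"
    unfolding equidistributed_perm_def by blast
  have per: "\<And>i j. N \<le> i \<Longrightarrow> N \<le> j \<Longrightarrow> (b i < b j \<longleftrightarrow> b (i + t) < b (j + t))"
    using perA eq unfolding perm_equiv_def by blast
  have range: "\<And>n. b n \<in> {0..1}" and lim: "\<And>s. s \<in> {0..1} \<Longrightarrow> (\<lambda>n. real (card {i. i < n \<and> b i < s}) / real n) \<longlonglongrightarrow> s"
    using ed unfolding equidistributed_seq_def by auto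
  define c where "c r k = b (N + r + k * t)" for r k
  have conv: "convergent (c r)" for r
  proof (rule Bseq_monoseq_convergent)
    show "monoseq (c r)" unfolding c_def using class_mono[of N b t "N + r", OF per] by (simp add: add.assoc)
    show "Bseq (c r)" unfolding c_def using range
      by (intro BseqI'[of _ 1]) (auto simp: abs_le_iff)
  qed
  define L where "L r = lim (c r)" for r
  have cL: "c r \<longlonglongrightarrow> L r" for r using conv[of r] unfolding L_def by (simp add: convergent_LIMSEQ_iff)
  define S where "S = L ` {..<t}"
  have "finite S" unfolding S_def by simp
  have "infinite ({0<..<1::real} - S)" using \<open>finite S\<close> by (simp add: infinite_Ioo)
  then obtain x where x: "x \<in> {0<..<1::real} - S" using infinite_imp_nonempty by blast
  have "open ({0<..<1::real} - S)" using \<open>finite S\<close> by (intro open_Diff finite_imp_closed) auto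
  then obtain e where e: "e > 0" "\<And>y. dist y x < e \<Longrightarrow> y \<in> {0<..<1::real} - S" using x unfolding open_dist by blast
  define u where "u = x - e/2"
  define v where "v = x + e/2"
  have uv: "u < v" using e unfolding u_def v_def by simp
  have "dist u x < e" "dist v x < e" using e unfolding u_def v_def by (auto simp: dist_real_def)
  hence u01: "u \<in> {0..1}" and v01: "v \<in> {0..1}" using e(2)[of u] e(2)[of v] by auto
  have far: "\<bar>L r - x\<bar> \<ge> e" if "r < t" for r
  proof (rule ccontr)
    assume "\<not> ?thesis"
    hence "dist (L r) x < e" by (auto simp: dist_real_def)
    moreover have "L r \<in> S" using that unfolding S_def by auto
    ultimately show False using e(2) by blast
  qed
  have "\<forall>r\<in>{..<t}. eventually (\<lambda>k. \<bar>c r k - L r\<bar> < e/2) sequentially"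
  proof
    fix r
    from cL[of r] have "eventually (\<lambda>k. dist (c r k) (L r) < e/2) sequentially"
      using e by (intro tendstoD) auto
    thus "eventually (\<lambda>k. \<bar>c r k - L r\<bar> < e/2) sequentially" by (simp add: dist_real_def)
  qed
  hence "eventually (\<lambda>k. \<forall>r\<in>{..<t}. \<bar>c r k - L r\<bar> < e/2) sequentially"
    by (intro eventually_ball_finite) auto
  then obtain K where K: "\<And>k r. k \<ge> K \<Longrightarrow> r < t \<Longrightarrow> \<bar>c r k - L r\<bar> < e/2"
    unfolding eventually_sequentially by blast
  define M where "M = N + K * t"
  have outside: "\<not> (u \<le> b i \<and> b i < v)" if "i \<ge> M" for i
  proof -
    define r where "r = (i - N) mod t"
    define k where "k = (i - N) div t"
    have "i = N + r + k * t" unfolding r_def k_def using that unfolding M_def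
      by (metis add.commute add.left_commute le_add1 le_add_diff_inverse le_trans mod_div_mult_eq mult.commute)
    moreover have "r < t" unfolding r_def using t by simp
    moreover have "k \<ge> K" unfolding k_def M_def using that t unfolding M_def
      by (metis add_diff_cancel_left' diff_le_mono div_le_mono le_iff_add nonzero_mult_div_cancel_right not_one_le_zero)
    ultimately have "\<bar>b i - L r\<bar> < e/2" using K unfolding c_def by auto
    with far[OF \<open>r < t\<close>] show ?thesis unfolding u_def v_def by (simp add: abs_if split: if_splits; linarith)
  qed
  define cu where "cu n = real (card {i. i < n \<and> b i < u})" for n
  define cv where "cv n = real (card {i. i < n \<and> b i < v})" for n
  have bound: "(cv n - cu n) / real n \<le> real M / real n" for n
  proof -
    have "{i. i < n \<and> b i < v} \<subseteq> {i. i < n \<and> b i < u} \<union> {..<M}"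
      using outside by (auto simp: not_le) (meson not_le)
    hence "card {i. i < n \<and> b i < v} \<le> card ({i. i < n \<and> b i < u} \<union> {..<M})"
      by (intro card_mono) auto
    also have "\<dots> \<le> card {i. i < n \<and> b i < u} + card {..<M}" by (rule card_Un_le)
    finally have "cv n - cu n \<le> real M" unfolding cu_def cv_def by simp
    thus ?thesis by (simp add: divide_right_mono)
  qed
  have "(\<lambda>n. cv n / real n - cu n / real n) \<longlonglongrightarrow> v - u"
    using lim[OF v01] lim[OF u01] unfolding cu_def cv_def by (intro tendsto_diff)
  hence l1: "(\<lambda>n. (cv n - cu n) / real n) \<longlonglongrightarrow> v - u" by (simp add: diff_divide_distrib)
  have "v - u \<le> 0"
    by (rule LIMSEQ_le[OF l1 lim_const_over_n[of "real M"]]) (use bound in auto)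
  with uv show False by simp
qed

end
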